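(* Let $\mathcal B=(\mathcal T,A,p,c)$ be a BMDP with $n=|\mathcal T|$, let $F:[0,\infty]^n\to[0,\infty]^n$ be its fixed-point operator, let $\mathbf c^*\in[0,\infty]^n$ be the vector of optimal expected total costs, and let $\mathbf x^0=\mathbf 0$, $\mathbf x^{k+1}=F(\mathbf x^k)$ for $k\ge 0$. Then: (a) $F$ is monotone (i.e. $\mathbf x\le\mathbf y$ implies $F(\mathbf x)\le F(\mathbf y)$) and continuous (i.e. $F(\lim_k \mathbf y^k)=\lim_k F(\mathbf y^k)$ for every nondecreasing sequence $(\mathbf y^k)$ in $[0,\infty]^n$); consequently $\mathbf 0\le\mathbf x^k\le\mathbf x^{k+1}$ for all $k\ge0$. (b) $\mathbf c^*=F(\mathbf c^* )$. (c) $\mathbf x^k\le\mathbf c^*$ for all $k\ge 0$. (d) For every $\mathbf c'\in[0,\infty]^n$ with $\mathbf c'=F(\mathbf c')$, we have $\mathbf c^*\le\mathbf c'$. (e) $\mathbf c^*=\lim_{k\to\infty}\mathbf x^k$.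
   Context: A branching Markov decision process (BMDP) is a tuple $\mathcal B=(\mathcal T,A,p,c)$ where $\mathcal T$ is a finite set of types, $A$ is a finite set of actions, $p:\mathcal T\times A\to \mathrm{Dist}(\mathcal T^* )$ is a partial function assigning to some pairs $(q,a)$ a probability distribution with finite support over the set $\mathcal T^*$ of finite lists (words) of types, and $c:\mathcal T\times A\to\mathbb R_{>0}$ is a cost function with strictly positive values. $A(q)$ denotes the (nonempty) set of actions $a$ for which $p(q,a)$ is defined. A branching Markov chain (BMC) is a BMDP with $|A(q)|=1$ for every $q$. For a list $\alpha$, $|\alpha|$ is its length and $\alpha_i$ its $i$-th element; $\varepsilon$ is the empty list. Semantics: the BMDP induces an MDP whose states are lists $\alpha\in\mathcal T^*$ (of "entities"). In state $\alpha$ the enabled actions are pairs $(i,a)$ with $1\le i\le|\alpha|$ and $a\in A(\alpha_i)$; taking $(i,a)$ incurs cost $c(\alpha_i,a)$ and moves to $\alpha_1\cdots\alpha_{i-1}\cdot\beta\cdot\alpha_{i+1}\cdots\alpha_{|\alpha|}$ with probability $p(\alpha_i,a)(\beta)$, for each $\beta\in\mathcal T^*$. The state $\varepsilon$ has no actions; once reached, the process stays there forever and incurs no further cost. A strategy maps each finite history (path) to a probability distribution over the actions enabled in its last state; a strategy $\sigma$ and initial state $\alpha$ induce a probability measure on runs. $\mathrm{ETotal}_N(\alpha,\sigma)$ denotes the expected sum of the costs incurred in the first $N$ steps; $\mathrm{ETotal}_*(\alpha,\sigma)=\lim_{N\to\infty}\mathrm{ETotal}_N(\alpha,\sigma)\in[0,\infty]$;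 and $\mathrm{ETotal}_*(\alpha)=\inf_\sigma \mathrm{ETotal}_*(\alpha,\sigma)$ over all strategies. The vector $\mathbf c^*\in[0,\infty]^{\mathcal T}$ is defined by $\mathbf c^*_q=\mathrm{ETotal}_*(q)$ (starting from the one-entity list $q$). The fixed-point operator $F:[0,\infty]^{\mathcal T}\to[0,\infty]^{\mathcal T}$ is $F(\mathbf x)_q=\min_{a\in A(q)}\Big(c(q,a)+\sum_{\alpha\in\mathcal T^*}p(q,a)(\alpha)\sum_{i=1}^{|\alpha|}\mathbf x_{\alpha_i}\Big)$, with conventions $0\cdot\infty=0$ and $r+\infty=\infty$. Vectors are compared componentwise. *)

theory Defs
  imports "HOL-Probability.Probability"
begin

text \<open>A BMDP is given by a partial probability function
  p :: 'q \<Rightarrow> 'a \<Rightarrow> 'q list pmf option  (None = action not enabled)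
  and a cost function c :: 'q \<Rightarrow> 'a \<Rightarrow> real.
  Lists are indexed from 0 (entity i of a list is xs ! i, i < length xs).\<close>

definition bmdp :: "('q::finite \<Rightarrow> 'a::finite \<Rightarrow> 'q list pmf option) \<Rightarrow> ('q \<Rightarrow> 'a \<Rightarrow> real) \<Rightarrow> bool" where
  "bmdp p c \<longleftrightarrow>
     (\<forall>q. \<exists>a. p q a \<noteq> None) \<and>
     (\<forall>q a d. p q a = Some d \<longrightarrow> finite (set_pmf d)) \<and>
     (\<forall>q a. p q a \<noteq> None \<longrightarrow> c q a > 0)"

definition enabled :: "('q \<Rightarrow> 'a \<Rightarrow> 'q list pmf option) \<Rightarrow> 'q \<Rightarrow> 'a set" where
  "enabled p q = {a. p q a \<noteq> None}"

text \<open>Histories (finite paths) of the induced MDP: an initial state followed by a list of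
  (action taken, successor state) pairs. An action of the induced MDP is a pair (i,a).\<close>
type_synonym ('q,'a) hist = "'q list \<times> ((nat \<times> 'a) \<times> 'q list) list"

definition last_state :: "('q,'a) hist \<Rightarrow> 'q list" where
  "last_state h = (if snd h = [] then fst h else snd (last (snd h)))"

definition extend :: "('q,'a) hist \<Rightarrow> (nat \<times> 'a) \<Rightarrow> 'q list \<Rightarrow> ('q,'a) hist" where
  "extend h act s = (fst h, snd h @ [(act, s)])"

definition replace_at :: "'q list \<Rightarrow> nat \<Rightarrow> 'q list \<Rightarrow> 'q list" where
  "replace_at \<alpha> i \<beta> = take i \<alpha> @ \<beta> @ drop (Suc i) \<alpha>"

definition strategy :: "('q \<Rightarrow> 'a \<Rightarrow> 'q list pmf option) \<Rightarrow> (('q,'a) hist \<Rightarrow> (nat \<times> 'a) pmf) \<Rightarrow> bool" where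
  "strategy p \<sigma> \<longleftrightarrow>
     (\<forall>h. last_state h \<noteq> [] \<longrightarrow>
        (\<forall>(i,a) \<in> set_pmf (\<sigma> h). i < length (last_state h) \<and> p (last_state h ! i) a \<noteq> None))"

text \<open>Expected cost of the next N steps, continuing from history h under strategy \<sigma>
  (backward recursion = expectation w.r.t. the induced measure on runs).\<close>
fun ETotalN :: "('q \<Rightarrow> 'a \<Rightarrow> 'q list pmf option) \<Rightarrow> ('q \<Rightarrow> 'a \<Rightarrow> real) \<Rightarrow>
    (('q,'a) hist \<Rightarrow> (nat \<times> 'a) pmf) \<Rightarrow> nat \<Rightarrow> ('q,'a) hist \<Rightarrow> ennreal" where
  "ETotalN p c \<sigma> 0 h = 0"
| "ETotalN p c \<sigma> (Suc N) h =
     (if last_state h = [] then 0 else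
       (\<integral>\<^sup>+ act. (ennreal (c (last_state h ! fst act) (snd act)) +
          (\<integral>\<^sup>+ \<beta>. ETotalN p c \<sigma> N (extend h act (replace_at (last_state h) (fst act) \<beta>))
             \<partial>measure_pmf (the (p (last_state h ! fst act) (snd act)))))
        \<partial>measure_pmf (\<sigma> h)))"

definition ETotal_strat :: "('q \<Rightarrow> 'a \<Rightarrow> 'q list pmf option) \<Rightarrow> ('q \<Rightarrow> 'a \<Rightarrow> real) \<Rightarrow>
    'q list \<Rightarrow> (('q,'a) hist \<Rightarrow> (nat \<times> 'a) pmf) \<Rightarrow> ennreal" where
  "ETotal_strat p c \<alpha> \<sigma> = lim (\<lambda>N. ETotalN p c \<sigma> N (\<alpha>, []))"

definition ETotal :: "('q \<Rightarrow> 'a \<Rightarrow> 'q list pmf option) \<Rightarrow> ('q \<Rightarrow> 'a \<Rightarrow> real) \<Rightarrow> 'q list \<Rightarrow> ennreal" where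
  "ETotal p c \<alpha> = (INF \<sigma> \<in> {\<sigma>. strategy p \<sigma>}. ETotal_strat p c \<alpha> \<sigma>)"

definition cstar :: "('q \<Rightarrow> 'a \<Rightarrow> 'q list pmf option) \<Rightarrow> ('q \<Rightarrow> 'a \<Rightarrow> real) \<Rightarrow> 'q \<Rightarrow> ennreal" where
  "cstar p c q = ETotal p c [q]"

text \<open>The fixed-point operator F. For finitely supported distributions the integral is the
  finite sum of probability times value, with 0 * \<infinity> = 0 in ennreal.\<close>
definition Fop :: "('q \<Rightarrow> 'a \<Rightarrow> 'q list pmf option) \<Rightarrow> ('q \<Rightarrow> 'a \<Rightarrow> real) \<Rightarrow>
    ('q \<Rightarrow> ennreal) \<Rightarrow> ('q \<Rightarrow> ennreal)" where
  "Fop p c x q = Min ((\<lambda>a. ennreal (c q a) +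
        (\<integral>\<^sup>+ \<alpha>. (\<Sum>i<length \<alpha>. x (\<alpha> ! i)) \<partial>measure_pmf (the (p q a)))) ` enabled p q)"

end

theory Submission imports Defs begin

lemma sum_nth_eq: "(\<Sum>i<length \<alpha>. x (\<alpha>!i)) = sum_list (map x \<alpha>)"
  by (simp add: sum_list_sum_nth atLeast0LessThan)

definition val :: "('q \<Rightarrow> 'a \<Rightarrow> 'q list pmf option) \<Rightarrow> ('q \<Rightarrow> 'a \<Rightarrow> real) \<Rightarrow> ('q \<Rightarrow> ennreal) \<Rightarrow> 'q \<Rightarrow> 'a \<Rightarrow> ennreal" where
  "val p c x q a = ennreal (c q a) + (\<integral>\<^sup>+ \<alpha>. sum_list (map x \<alpha>) \<partial>measure_pmf (the (p q a)))"

lemma Fop_alt: "Fop p c x q = Min (val p c x q ` enabled p q)"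
  unfolding Fop_def val_def sum_nth_eq by simp

lemma enabled_fin_ne:
  fixes p :: "'q::finite \<Rightarrow> 'a::finite \<Rightarrow> 'q list pmf option"
  assumes "bmdp p c" shows "finite (enabled p q)" "enabled p q \<noteq> {}"
  using assms by (auto simp: bmdp_def enabled_def)

lemma Fop_le:
  fixes p :: "'q::finite \<Rightarrow> 'a::finite \<Rightarrow> 'q list pmf option"
  assumes "bmdp p c" "a \<in> enabled p q" shows "Fop p c x q \<le> val p c x q a"
  unfolding Fop_alt using enabled_fin_ne[OF assms(1)] assms(2) by (intro Min_le) auto

lemma Fop_att:
  fixes p :: "'q::finite \<Rightarrow> 'a::finite \<Rightarrow> 'q list pmf option"
  assumes "bmdp p c" shows "\<exists>a\<in>enabled p q. Fop p c x q = val p c x q a"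
proof -
  have "Min (val p c x q ` enabled p q) \<in> val p c x q ` enabled p q"
    using enabled_fin_ne[OF assms] by (intro Min_in) auto
  then show ?thesis unfolding Fop_alt by auto
qed

lemma val_mono: "x \<le> y \<Longrightarrow> val p c x q a \<le> val p c y q a"
  unfolding val_def
  by (intro add_left_mono nn_integral_mono sum_list_mono) (auto simp: le_fun_def)

lemma Fop_mono:
  fixes p :: "'q::finite \<Rightarrow> 'a::finite \<Rightarrow> 'q list pmf option"
  assumes "bmdp p c" "x \<le> y" shows "Fop p c x \<le> Fop p c y"
proof (rule le_funI)
  fix q
  obtain a where a: "a \<in> enabled p q" "Fop p c y q = val p c y q a" using Fop_att[OF assms(1)] by blast
  have "Fop p c x q \<le> val p c x q a" by (rule Fop_le[OF assms(1) a(1)])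
  also have "\<dots> \<le> val p c y q a" by (rule val_mono[OF assms(2)])
  finally show "Fop p c x q \<le> Fop p c y q" using a(2) by simp
qed

lemma tendsto_Min_fin:
  fixes l :: "'b \<Rightarrow> 'c::{linorder_topology}"
  assumes "finite A" "A \<noteq> {}" "\<And>a. a\<in>A \<Longrightarrow> ((\<lambda>k. f k a) \<longlongrightarrow> l a) F"
  shows "((\<lambda>k. Min ((\<lambda>a. f k a) ` A)) \<longlongrightarrow> Min (l ` A)) F"
  using assms
proof (induction A rule: finite_ne_induct)
  case (singleton x) then show ?case by simp
next
  case (insert x A)
  have "((\<lambda>k. min (f k x) (Min ((\<lambda>a. f k a) ` A))) \<longlongrightarrow> min (l x) (Min (l ` A))) F"
    using insert by (intro tendsto_min) auto
  then show ?case using insert by (simp add: Min_insert)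
qed

lemma tendsto_sum_list_map:
  fixes Y :: "nat \<Rightarrow> 'q \<Rightarrow> ennreal"
  assumes "\<And>q. (\<lambda>k. Y k q) \<longlonglongrightarrow> L q"
  shows "(\<lambda>k. sum_list (map (Y k) \<beta>)) \<longlonglongrightarrow> sum_list (map L \<beta>)"
  by (induction \<beta>) (auto intro!: tendsto_add assms)

lemma tendsto_val:
  fixes Y :: "nat \<Rightarrow> 'q \<Rightarrow> ennreal"
  assumes fin: "finite (set_pmf (the (p q a)))" and Y: "\<And>q. (\<lambda>k. Y k q) \<longlonglongrightarrow> L q"
  shows "(\<lambda>k. val p c (Y k) q a) \<longlonglongrightarrow> val p c L q a"
proof -
  let ?d = "the (p q a)"
  have "(\<lambda>k. \<Sum>\<beta>\<in>set_pmf ?d. ennreal (pmf ?d \<beta>) * sum_list (map (Y k) \<beta>))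
        \<longlonglongrightarrow> (\<Sum>\<beta>\<in>set_pmf ?d. ennreal (pmf ?d \<beta>) * sum_list (map L \<beta>))"
    by (intro tendsto_sum ennreal_tendsto_cmult tendsto_sum_list_map Y) auto
  then show ?thesis unfolding val_def
    by (intro tendsto_add tendsto_const)
       (simp add: nn_integral_measure_pmf_finite[OF fin] mult.commute)
qed

lemma Fop_cont:
  fixes p :: "'q::finite \<Rightarrow> 'a::finite \<Rightarrow> 'q list pmf option"
  assumes "bmdp p c" "\<And>q. (\<lambda>k. Y k q) \<longlonglongrightarrow> L q"
  shows "(\<lambda>k. Fop p c (Y k) q) \<longlonglongrightarrow> Fop p c L q"
  unfolding Fop_alt
proof (rule tendsto_Min_fin[OF enabled_fin_ne[OF assms(1)]])
  fix a assume "a \<in> enabled p q"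
  then obtain d where "p q a = Some d" by (auto simp: enabled_def)
  then have "finite (set_pmf (the (p q a)))" using assms(1) by (auto simp: bmdp_def)
  then show "(\<lambda>k. val p c (Y k) q a) \<longlonglongrightarrow> val p c L q a"
    by (rule tendsto_val[OF _ assms(2)])
qed


lemma last_state_extend[simp]: "last_state (extend h act s) = s"
  by (simp add: last_state_def extend_def)

lemma pmf_int_const[simp]: "(\<integral>\<^sup>+x. (k::ennreal) \<partial>measure_pmf d) = k"
  by (simp add: measure_pmf.emeasure_space_1)

lemma pmf_int_add_const: "(\<integral>\<^sup>+x. f x + (k::ennreal) \<partial>measure_pmf d) = (\<integral>\<^sup>+x. f x \<partial>measure_pmf d) + k"
  by (subst nn_integral_add) auto

definition choice :: "('q \<Rightarrow> 'a \<Rightarrow> 'q list pmf option) \<Rightarrow> ('q \<Rightarrow> 'a \<Rightarrow> real) \<Rightarrow> ('q \<Rightarrow> ennreal) \<Rightarrow> 'q \<Rightarrow> 'a" where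
  "choice p c x q = (SOME a. a \<in> enabled p q \<and> Fop p c x q = val p c x q a)"

lemma choice:
  fixes p :: "'q::finite \<Rightarrow> 'a::finite \<Rightarrow> 'q list pmf option"
  assumes "bmdp p c" shows "choice p c x q \<in> enabled p q \<and> Fop p c x q = val p c x q (choice p c x q)"
  unfolding choice_def using Fop_att[OF assms, of q x] by (rule someI_ex[OF bexE]) blast

definition strat0 :: "('q \<Rightarrow> 'a \<Rightarrow> 'q list pmf option) \<Rightarrow> ('q \<Rightarrow> 'a \<Rightarrow> real) \<Rightarrow> ('q \<Rightarrow> ennreal) \<Rightarrow> ('q,'a) hist \<Rightarrow> (nat \<times> 'a) pmf" where
  "strat0 p c x h = return_pmf (0, choice p c x (hd (last_state h)))"

lemma strat0:
  fixes p :: "'q::finite \<Rightarrow> 'a::finite \<Rightarrow> 'q list pmf option"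
  assumes "bmdp p c" shows "strategy p (strat0 p c x)"
  unfolding strategy_def strat0_def
proof (intro allI impI ballI)
  fix h :: "('q,'a) hist" and ia :: "nat \<times> 'a" assume ne: "last_state h \<noteq> []" and ia: "ia \<in> set_pmf (return_pmf (0, choice p c x (hd (last_state h))))"
  then show "case ia of (i, a) \<Rightarrow> i < length (last_state h) \<and> p (last_state h ! i) a \<noteq> None"
    using choice[OF assms, of x "hd (last_state h)"] by (auto simp: enabled_def hd_conv_nth)
qed

lemma UB:
  fixes p :: "'q::finite \<Rightarrow> 'a::finite \<Rightarrow> 'q list pmf option"
  assumes "bmdp p c" and fp: "x = Fop p c x"
  shows "ETotalN p c (strat0 p c x) N h \<le> sum_list (map x (last_state h))"
proof (induction N arbitrary: h)
  case 0 then show ?case by simp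
next
  case (Suc N)
  show ?case
  proof (cases "last_state h")
    case Nil then show ?thesis by simp
  next
    case (Cons q rest)
    define a where "a = choice p c x q"
    have ch: "a \<in> enabled p q" "Fop p c x q = val p c x q a" using choice[OF assms(1), of x q] a_def by auto
    have "ETotalN p c (strat0 p c x) (Suc N) h =
       ennreal (c q a) + (\<integral>\<^sup>+ \<beta>. ETotalN p c (strat0 p c x) N (extend h (0,a) (\<beta> @ rest)) \<partial>measure_pmf (the (p q a)))"
      using Cons by (simp add: strat0_def a_def replace_at_def)
    also have "\<dots> \<le> ennreal (c q a) + (\<integral>\<^sup>+ \<beta>. sum_list (map x \<beta>) + sum_list (map x rest) \<partial>measure_pmf (the (p q a)))"
      using Suc.IH by (intro add_left_mono nn_integral_mono) (metis last_state_extend map_append sum_list_append)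
    also have "\<dots> = val p c x q a + sum_list (map x rest)"
      by (simp add: pmf_int_add_const val_def add.assoc)
    also have "\<dots> = sum_list (map x (last_state h))"
      using ch fp Cons by (metis list.simps(9) sum_list.Cons)
    finally show ?thesis .
  qed
qed


fun ProbN :: "('q \<Rightarrow> 'a \<Rightarrow> 'q list pmf option) \<Rightarrow> (('q,'a) hist \<Rightarrow> (nat \<times> 'a) pmf) \<Rightarrow> nat \<Rightarrow> ('q,'a) hist \<Rightarrow> ennreal" where
  "ProbN p \<sigma> 0 h = (if last_state h = [] then 0 else 1)"
| "ProbN p \<sigma> (Suc N) h =
     (if last_state h = [] then 0 else
       (\<integral>\<^sup>+ act. (\<integral>\<^sup>+ \<beta>. ProbN p \<sigma> N (extend h act (replace_at (last_state h) (fst act) \<beta>))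
             \<partial>measure_pmf (the (p (last_state h ! fst act) (snd act))))
        \<partial>measure_pmf (\<sigma> h)))"

lemma ProbN_le1: "ProbN p \<sigma> N h \<le> 1"
proof (induction N arbitrary: h)
  case 0 then show ?case by simp
next
  case (Suc N)
  have "(\<integral>\<^sup>+ act. (\<integral>\<^sup>+ \<beta>. ProbN p \<sigma> N (extend h act (replace_at (last_state h) (fst act) \<beta>))
             \<partial>measure_pmf (the (p (last_state h ! fst act) (snd act))))
        \<partial>measure_pmf (\<sigma> h)) \<le> 1"
    by (intro measure_pmf.nn_integral_le_const AE_pmfI Suc.IH) auto
  then show ?case by simp
qed

lemma ETotalN_mono: "ETotalN p c \<sigma> N h \<le> ETotalN p c \<sigma> (Suc N) h"
proof (induction N arbitrary: h)
  case 0 then show ?case by simp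
next
  case (Suc N)
  show ?case
  proof (cases "last_state h = []")
    case True then show ?thesis by simp
  next
    case False
    have "(\<integral>\<^sup>+ act. (ennreal (c (last_state h ! fst act) (snd act)) +
          (\<integral>\<^sup>+ \<beta>. ETotalN p c \<sigma> N (extend h act (replace_at (last_state h) (fst act) \<beta>))
             \<partial>measure_pmf (the (p (last_state h ! fst act) (snd act)))))
        \<partial>measure_pmf (\<sigma> h)) \<le> (\<integral>\<^sup>+ act. (ennreal (c (last_state h ! fst act) (snd act)) +
          (\<integral>\<^sup>+ \<beta>. ETotalN p c \<sigma> (Suc N) (extend h act (replace_at (last_state h) (fst act) \<beta>))
             \<partial>measure_pmf (the (p (last_state h ! fst act) (snd act)))))
        \<partial>measure_pmf (\<sigma> h))"
      by (intro nn_integral_mono add_left_mono) (rule Suc.IH)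
    then show ?thesis using False by (simp only: ETotalN.simps(2) if_False)
  qed
qed

lemma ETotalN_incseq: "incseq (\<lambda>N. ETotalN p c \<sigma> N h)"
  by (intro incseq_SucI ETotalN_mono)

lemma ETotal_strat_SUP: "ETotal_strat p c \<alpha> \<sigma> = (SUP N. ETotalN p c \<sigma> N (\<alpha>, []))"
  unfolding ETotal_strat_def using LIMSEQ_SUP[OF ETotalN_incseq] by (rule limI)

lemma strategyD: "strategy p \<sigma> \<Longrightarrow> last_state h \<noteq> [] \<Longrightarrow> act \<in> set_pmf (\<sigma> h) \<Longrightarrow>
    fst act < length (last_state h) \<and> p (last_state h ! fst act) (snd act) \<noteq> None"
  unfolding strategy_def by (cases act) fastforce

lemma cost_bound:
  assumes "strategy p \<sigma>" and kap: "0 \<le> \<kappa>" "\<And>q a. p q a \<noteq> None \<Longrightarrow> \<kappa> \<le> c q a"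
  shows "ennreal \<kappa> * of_nat N * ProbN p \<sigma> N h \<le> ETotalN p c \<sigma> N h"
proof (induction N arbitrary: h)
  case 0 then show ?case by simp
next
  case (Suc N)
  show ?case
  proof (cases "last_state h = []")
    case True then show ?thesis by simp
  next
    case False
    let ?d = "\<lambda>act. measure_pmf (the (p (last_state h ! fst act) (snd act)))"
    let ?h' = "\<lambda>act \<beta>. extend h act (replace_at (last_state h) (fst act) \<beta>)"
    have "ennreal \<kappa> * of_nat (Suc N) * ProbN p \<sigma> (Suc N) h =
        (\<integral>\<^sup>+ act. ennreal \<kappa> * of_nat (Suc N) * (\<integral>\<^sup>+ \<beta>. ProbN p \<sigma> N (?h' act \<beta>) \<partial>?d act) \<partial>measure_pmf (\<sigma> h))"
      using False by (simp add: nn_integral_cmult)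
    also have "\<dots> \<le> (\<integral>\<^sup>+ act. ennreal (c (last_state h ! fst act) (snd act)) + (\<integral>\<^sup>+ \<beta>. ETotalN p c \<sigma> N (?h' act \<beta>) \<partial>?d act) \<partial>measure_pmf (\<sigma> h))"
    proof (intro nn_integral_mono_AE AE_pmfI)
      fix act assume act: "act \<in> set_pmf (\<sigma> h)"
      have k: "\<kappa> \<le> c (last_state h ! fst act) (snd act)" using strategyD[OF assms(1) False act] kap by auto
      define P where "P = (\<integral>\<^sup>+ \<beta>. ProbN p \<sigma> N (?h' act \<beta>) \<partial>?d act)"
      have P1: "P \<le> 1" unfolding P_def by (auto intro!: measure_pmf.nn_integral_le_const AE_pmfI ProbN_le1)
      have "ennreal \<kappa> * of_nat (Suc N) * P = ennreal \<kappa> * P + ennreal \<kappa> * of_nat N * P"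
        by (simp add: distrib_left distrib_right algebra_simps)
      also have "\<dots> \<le> ennreal \<kappa> + (\<integral>\<^sup>+ \<beta>. ennreal \<kappa> * of_nat N * ProbN p \<sigma> N (?h' act \<beta>) \<partial>?d act)"
        using P1 by (intro add_mono) (auto simp: P_def nn_integral_cmult intro: mult_left_le)
      also have "\<dots> \<le> ennreal (c (last_state h ! fst act) (snd act)) + (\<integral>\<^sup>+ \<beta>. ETotalN p c \<sigma> N (?h' act \<beta>) \<partial>?d act)"
        using k by (intro add_mono nn_integral_mono Suc.IH ennreal_leI)
      finally show "ennreal \<kappa> * of_nat (Suc N) * (\<integral>\<^sup>+ \<beta>. ProbN p \<sigma> N (?h' act \<beta>) \<partial>?d act)
         \<le> ennreal (c (last_state h ! fst act) (snd act)) + (\<integral>\<^sup>+ \<beta>. ETotalN p c \<sigma> N (?h' act \<beta>) \<partial>?d act)"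
        unfolding P_def .
    qed
    also have "\<dots> = ETotalN p c \<sigma> (Suc N) h" using False by simp
    finally show ?thesis .
  qed
qed


definition X :: "('q \<Rightarrow> 'a \<Rightarrow> 'q list pmf option) \<Rightarrow> ('q \<Rightarrow> 'a \<Rightarrow> real) \<Rightarrow> nat \<Rightarrow> 'q \<Rightarrow> ennreal" where
  "X p c j = (Fop p c ^^ j) (\<lambda>_. 0)"

definition Xs :: "('q::finite \<Rightarrow> 'a \<Rightarrow> 'q list pmf option) \<Rightarrow> ('q \<Rightarrow> 'a \<Rightarrow> real) \<Rightarrow> nat \<Rightarrow> ennreal" where
  "Xs p c j = (\<Sum>q\<in>UNIV. X p c j q)"

definition Lmax :: "('q::finite \<Rightarrow> 'a::finite \<Rightarrow> 'q list pmf option) \<Rightarrow> nat" where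
  "Lmax p = (\<Sum>q\<in>UNIV. \<Sum>a\<in>UNIV. (case p q a of None \<Rightarrow> 0 | Some d \<Rightarrow> \<Sum>\<beta>\<in>set_pmf d. length \<beta>))"

fun w :: "('q::finite \<Rightarrow> 'a::finite \<Rightarrow> 'q list pmf option) \<Rightarrow> ('q \<Rightarrow> 'a \<Rightarrow> real) \<Rightarrow> nat \<Rightarrow> ennreal" where
  "w p c 0 = 0"
| "w p c (Suc j) = Xs p c (Suc j) + of_nat (Lmax p) * w p c j"

definition Psi where "Psi p c l = sum_list (map (\<lambda>(q,b). X p c b q) l)"
definition Dw where "Dw p c l = sum_list (map (\<lambda>(q,b). w p c b) l)"

lemma X_0[simp]: "X p c 0 q = 0" by (simp add: X_def)
lemma X_Suc: "X p c (Suc j) = Fop p c (X p c j)" by (simp add: X_def)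

lemma sum_list_fin: "(\<And>x. x \<in> set l \<Longrightarrow> f x < (\<top>::ennreal)) \<Longrightarrow> sum_list (map f l) < \<top>"
  by (induction l) (auto simp: ennreal_add_less_top)

lemma X_fin:
  fixes p :: "'q::finite \<Rightarrow> 'a::finite \<Rightarrow> 'q list pmf option"
  assumes "bmdp p c" shows "X p c j q < \<top>"
proof (induction j arbitrary: q)
  case 0 then show ?case by simp
next
  case (Suc j)
  obtain a where a: "a \<in> enabled p q" using enabled_fin_ne[OF assms] by blast
  then obtain d where d: "p q a = Some d" by (auto simp: enabled_def)
  have fin: "finite (set_pmf d)" using assms d by (auto simp: bmdp_def)
  have "val p c (X p c j) q a < \<top>"
    unfolding val_def using d fin
    by (simp add: nn_integral_measure_pmf_finite ennreal_add_less_top sum_list_fin Suc ennreal_mult_less_top)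
  moreover have "X p c (Suc j) q \<le> val p c (X p c j) q a"
    unfolding X_Suc by (rule Fop_le[OF assms a])
  ultimately show ?case by (meson le_less_trans)
qed

lemma X_step:
  fixes p :: "'q::finite \<Rightarrow> 'a::finite \<Rightarrow> 'q list pmf option"
  assumes "bmdp p c" "a \<in> enabled p q" shows "X p c b q \<le> val p c (X p c (b - 1)) q a"
proof (cases b)
  case 0 then show ?thesis by simp
next
  case (Suc j) then show ?thesis using Fop_le[OF assms] by (simp add: X_Suc)
qed

lemma w_fin:
  fixes p :: "'q::finite \<Rightarrow> 'a::finite \<Rightarrow> 'q list pmf option"
  assumes "bmdp p c" shows "w p c j < \<top>"
  by (induction j) (auto simp: Xs_def X_fin[OF assms] ennreal_add_less_top ennreal_mult_less_top of_nat_less_top)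

lemma X_le_w:
  fixes p :: "'q::finite \<Rightarrow> 'a::finite \<Rightarrow> 'q list pmf option"
  shows "X p c j q \<le> w p c j"
proof (cases j)
  case 0 then show ?thesis by simp
next
  case (Suc k)
  have "X p c j q \<le> Xs p c j" unfolding Xs_def by (rule member_le_sum) auto
  then show ?thesis using Suc by (simp add: add_increasing2)
qed

lemma len_le_Lmax:
  fixes p :: "'q::finite \<Rightarrow> 'a::finite \<Rightarrow> 'q list pmf option"
  assumes "bmdp p c" "p q a = Some d" "\<beta> \<in> set_pmf d" shows "length \<beta> \<le> Lmax p"
proof -
  have fin: "finite (set_pmf d)" using assms by (auto simp: bmdp_def)
  have "length \<beta> \<le> (case p q a of None \<Rightarrow> 0 | Some d \<Rightarrow> \<Sum>\<beta>\<in>set_pmf d. length \<beta>)"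
    using assms(2,3) fin by (simp add: member_le_sum)
  also have "\<dots> \<le> (\<Sum>a\<in>UNIV. (case p q a of None \<Rightarrow> 0 | Some d \<Rightarrow> \<Sum>\<beta>\<in>set_pmf d. length \<beta>))"
    by (rule member_le_sum) auto
  also have "\<dots> \<le> Lmax p" unfolding Lmax_def
    by (rule member_le_sum[where f="\<lambda>q. \<Sum>a\<in>UNIV. (case p q a of None \<Rightarrow> 0 | Some d \<Rightarrow> \<Sum>\<beta>\<in>set_pmf d. length \<beta>)"]) auto
  finally show ?thesis .
qed

lemma sum_list_replace_at:
  fixes f :: "'b \<Rightarrow> 'c::comm_monoid_add"
  assumes "i < length l"
  shows "sum_list (map f (replace_at l i m)) + f (l!i) = sum_list (map f l) + sum_list (map f m)"
proof -
  have "l = take i l @ l!i # drop (Suc i) l" using assms by (simp add: id_take_nth_drop)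
  then have "sum_list (map f l) = sum_list (map f (take i l)) + f (l!i) + sum_list (map f (drop (Suc i) l))"
    by (metis (no_types) add.assoc map_append sum_list.Cons sum_list_append list.simps(9))
  then show ?thesis unfolding replace_at_def by (simp add: add_ac)
qed

lemma zip_replace_at:
  assumes "length xs = length ys" "length m = length n"
  shows "zip (replace_at xs i m) (replace_at ys i n) = replace_at (zip xs ys) i (zip m n)"
  using assms by (simp add: replace_at_def zip_append take_zip drop_zip)

lemma length_replace_at: "i < length xs \<Longrightarrow> length (replace_at xs i m) = length xs - 1 + length m"
  by (simp add: replace_at_def)

lemma sum_zip_replicate: "sum_list (map (\<lambda>(q,b). g b q) (zip \<beta> (replicate (length \<beta>) k))) = sum_list (map (g k) \<beta>)"
  by (induction \<beta>) auto

lemma sum_zip_replicate2: "sum_list (map (\<lambda>(q,b). g b) (zip \<beta> (replicate (length \<beta>) k))) = of_nat (length \<beta>) * (g k :: ennreal)"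
  by (induction \<beta>) (auto simp: algebra_simps)


lemma LB:
  fixes p :: "'q::finite \<Rightarrow> 'a::finite \<Rightarrow> 'q list pmf option"
  assumes bm: "bmdp p c" and st: "strategy p \<sigma>"
  shows "length bs = length (last_state h) \<Longrightarrow>
    Psi p c (zip (last_state h) bs) \<le> ETotalN p c \<sigma> N h + Dw p c (zip (last_state h) bs) * ProbN p \<sigma> N h"
proof (induction N arbitrary: h bs)
  case 0
  show ?case
  proof (cases "last_state h = []")
    case True then show ?thesis by (simp add: Psi_def)
  next
    case False
    have "Psi p c (zip (last_state h) bs) \<le> Dw p c (zip (last_state h) bs)"
      unfolding Psi_def Dw_def by (intro sum_list_mono) (auto simp: X_le_w)
    then show ?thesis using False by simp
  qed
next
  case (Suc N)
  show ?case
  proof (cases "last_state h = []")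
    case True then show ?thesis by (simp add: Psi_def)
  next
    case False
    define \<alpha> where "\<alpha> = last_state h"
    define l where "l = zip \<alpha> bs"
    let ?d = "\<lambda>act. measure_pmf (the (p (\<alpha> ! fst act) (snd act)))"
    let ?h' = "\<lambda>act \<beta>. extend h act (replace_at \<alpha> (fst act) \<beta>)"
    let ?c = "\<lambda>act. ennreal (c (\<alpha> ! fst act) (snd act))"
    have core: "Psi p c l \<le> ?c act + (\<integral>\<^sup>+ \<beta>. ETotalN p c \<sigma> N (?h' act \<beta>) + Dw p c l * ProbN p \<sigma> N (?h' act \<beta>) \<partial>?d act)"
      if act: "act \<in> set_pmf (\<sigma> h)" for act
    proof -
      obtain i a where ia: "act = (i,a)" by (cases act)
      have i: "i < length \<alpha>" and pn: "p (\<alpha>!i) a \<noteq> None"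
        using strategyD[OF st False act] ia \<alpha>_def by auto
      then obtain d where d: "p (\<alpha>!i) a = Some d" by auto
      have en: "a \<in> enabled p (\<alpha>!i)" using pn by (simp add: enabled_def)
      define b where "b = bs ! i"
      define q where "q = \<alpha> ! i"
      have lenbs: "length bs = length \<alpha>" using Suc.prems \<alpha>_def by simp
      define bs' where "bs' = (\<lambda>\<beta>::'q list. replace_at bs i (replicate (length \<beta>) (b - 1)))"
      have l': "zip (replace_at \<alpha> i \<beta>) (bs' \<beta>) = replace_at l i (zip \<beta> (replicate (length \<beta>) (b - 1)))" for \<beta>
        unfolding bs'_def l_def by (rule zip_replace_at) (use lenbs in auto)
      have li: "l ! i = (q, b)" "i < length l" using i lenbs by (auto simp: l_def q_def b_def)
      have F1: "Psi p c (zip (replace_at \<alpha> i \<beta>) (bs' \<beta>)) + X p c b q = Psi p c l + sum_list (map (X p c (b - 1)) \<beta>)" for \<beta>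
        unfolding l' Psi_def using sum_list_replace_at[OF li(2), of "\<lambda>(q,b). X p c b q" "zip \<beta> (replicate (length \<beta>) (b - 1))"]
        by (simp add: li(1) sum_zip_replicate)
      have F2: "Dw p c (zip (replace_at \<alpha> i \<beta>) (bs' \<beta>)) \<le> Dw p c l" if \<beta>: "\<beta> \<in> set_pmf d" for \<beta>
      proof -
        have eq: "Dw p c (zip (replace_at \<alpha> i \<beta>) (bs' \<beta>)) + w p c b = Dw p c l + of_nat (length \<beta>) * w p c (b - 1)"
          unfolding l' Dw_def using sum_list_replace_at[OF li(2), of "\<lambda>(q,b). w p c b" "zip \<beta> (replicate (length \<beta>) (b - 1))"]
          by (simp add: li(1) sum_zip_replicate2)
        have "of_nat (length \<beta>) * w p c (b - 1) \<le> w p c b"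
        proof (cases b)
          case 0 then show ?thesis by simp
        next
          case (Suc j)
          have "of_nat (length \<beta>) * w p c j \<le> of_nat (Lmax p) * w p c j"
            using len_le_Lmax[OF bm d \<beta>] by (intro mult_right_mono) auto
          then show ?thesis using Suc by (simp add: add_increasing)
        qed
        then have "Dw p c (zip (replace_at \<alpha> i \<beta>) (bs' \<beta>)) + w p c b \<le> Dw p c l + w p c b"
          using eq by (metis add_left_mono)
        then show ?thesis using w_fin[OF bm, of b] by (auto simp add: ennreal_add_left_cancel_le add.commute[of _ "w p c b"])
      qed
      have IHb: "Psi p c (zip (replace_at \<alpha> i \<beta>) (bs' \<beta>)) \<le> ETotalN p c \<sigma> N (?h' act \<beta>) + Dw p c l * ProbN p \<sigma> N (?h' act \<beta>)"
        if \<beta>: "\<beta> \<in> set_pmf d" for \<beta>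
      proof -
        have "length (bs' \<beta>) = length (last_state (?h' act \<beta>))"
          using i lenbs by (simp add: bs'_def ia length_replace_at)
        then have "Psi p c (zip (last_state (?h' act \<beta>)) (bs' \<beta>)) \<le> ETotalN p c \<sigma> N (?h' act \<beta>) + Dw p c (zip (last_state (?h' act \<beta>)) (bs' \<beta>)) * ProbN p \<sigma> N (?h' act \<beta>)"
          by (rule Suc.IH)
        also have "\<dots> \<le> ETotalN p c \<sigma> N (?h' act \<beta>) + Dw p c l * ProbN p \<sigma> N (?h' act \<beta>)"
          using F2[OF \<beta>] by (intro add_left_mono mult_right_mono) (auto simp: ia)
        finally show ?thesis by (simp add: ia)
      qed
      have Xle: "X p c b q \<le> ennreal (c q a) + (\<integral>\<^sup>+ \<beta>. sum_list (map (X p c (b - 1)) \<beta>) \<partial>measure_pmf d)"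
        using X_step[OF bm en, of b] d by (simp add: val_def q_def)
      have "Psi p c l + X p c b q \<le> Psi p c l + (ennreal (c q a) + (\<integral>\<^sup>+ \<beta>. sum_list (map (X p c (b - 1)) \<beta>) \<partial>measure_pmf d))"
        using Xle by (rule add_left_mono)
      also have "\<dots> = ennreal (c q a) + (\<integral>\<^sup>+ \<beta>. sum_list (map (X p c (b - 1)) \<beta>) + Psi p c l \<partial>measure_pmf d)"
        by (subst pmf_int_add_const) (simp add: add_ac)
      also have "\<dots> = ennreal (c q a) + (\<integral>\<^sup>+ \<beta>. Psi p c (zip (replace_at \<alpha> i \<beta>) (bs' \<beta>)) + X p c b q \<partial>measure_pmf d)"
        unfolding F1 by (simp add: add.commute)
      also have "\<dots> = (ennreal (c q a) + (\<integral>\<^sup>+ \<beta>. Psi p c (zip (replace_at \<alpha> i \<beta>) (bs' \<beta>)) \<partial>measure_pmf d)) + X p c b q"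
        by (subst pmf_int_add_const) (simp add: add_ac)
      finally have "Psi p c l \<le> ennreal (c q a) + (\<integral>\<^sup>+ \<beta>. Psi p c (zip (replace_at \<alpha> i \<beta>) (bs' \<beta>)) \<partial>measure_pmf d)"
        using X_fin[OF bm, of b q] by (auto simp add: ennreal_add_left_cancel_le add.commute[of _ "X p c b q"])
      also have "\<dots> \<le> ennreal (c q a) + (\<integral>\<^sup>+ \<beta>. ETotalN p c \<sigma> N (?h' act \<beta>) + Dw p c l * ProbN p \<sigma> N (?h' act \<beta>) \<partial>measure_pmf d)"
        by (intro add_left_mono nn_integral_mono_AE AE_pmfI IHb)
      finally show ?thesis by (simp add: ia d q_def)
    qed
    have "Psi p c l = (\<integral>\<^sup>+ act. Psi p c l \<partial>measure_pmf (\<sigma> h))" by simp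
    also have "\<dots> \<le> (\<integral>\<^sup>+ act. ?c act + (\<integral>\<^sup>+ \<beta>. ETotalN p c \<sigma> N (?h' act \<beta>) + Dw p c l * ProbN p \<sigma> N (?h' act \<beta>) \<partial>?d act) \<partial>measure_pmf (\<sigma> h))"
      by (intro nn_integral_mono_AE AE_pmfI core)
    also have "\<dots> = (\<integral>\<^sup>+ act. (?c act + (\<integral>\<^sup>+ \<beta>. ETotalN p c \<sigma> N (?h' act \<beta>) \<partial>?d act)) + Dw p c l * (\<integral>\<^sup>+ \<beta>. ProbN p \<sigma> N (?h' act \<beta>) \<partial>?d act) \<partial>measure_pmf (\<sigma> h))"
      by (simp add: nn_integral_add nn_integral_cmult add.assoc)
    also have "\<dots> = (\<integral>\<^sup>+ act. ?c act + (\<integral>\<^sup>+ \<beta>. ETotalN p c \<sigma> N (?h' act \<beta>) \<partial>?d act) \<partial>measure_pmf (\<sigma> h))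
       + Dw p c l * (\<integral>\<^sup>+ act. (\<integral>\<^sup>+ \<beta>. ProbN p \<sigma> N (?h' act \<beta>) \<partial>?d act) \<partial>measure_pmf (\<sigma> h))"
      by (simp add: nn_integral_add nn_integral_cmult)
    also have "\<dots> = ETotalN p c \<sigma> (Suc N) h + Dw p c l * ProbN p \<sigma> (Suc N) h"
      using False by (simp add: \<alpha>_def)
    finally show ?thesis by (simp add: l_def \<alpha>_def)
  qed
qed


lemma final_arith:
  fixes \<Psi> D S :: ennreal and E P :: "nat \<Rightarrow> ennreal" and \<kappa> :: real
  assumes k: "\<kappa> > 0" and D: "D < \<top>" and h1: "\<And>N. \<Psi> \<le> E N + D * P N"
    and h2: "\<And>N. ennreal \<kappa> * of_nat N * P N \<le> E N" and h3: "\<And>N. E N \<le> S"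
  shows "\<Psi> \<le> S"
proof (rule ennreal_le_epsilon)
  fix e :: real assume S: "S < \<top>" and e: "0 < e"
  define r where "r = enn2real (D * S)"
  have DS: "D * S = ennreal r" using D S unfolding r_def
    by (simp add: ennreal_mult_less_top less_top ennreal_enn2real_if)
  obtain N :: nat where N: "r < of_nat N * (e * \<kappa>)" using ex_less_of_nat_mult[of "e * \<kappa>" r] e k by auto
  have r0: "0 \<le> r" unfolding r_def by simp
  then have Npos: "N > 0" using N by (cases N) auto
  define K where "K = ennreal \<kappa> * of_nat N"
  have K0: "K \<noteq> 0" "K \<noteq> \<top>" using k Npos by (auto simp: K_def ennreal_mult_eq_top_iff of_nat_less_top)
  have "K * (D * P N) = D * (ennreal \<kappa> * of_nat N * P N)" by (simp add: K_def ac_simps)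
  also have "\<dots> \<le> D * S" using h2[of N] h3[of N] by (intro mult_left_mono) auto
  also have "\<dots> \<le> ennreal (of_nat N * (e * \<kappa>))" unfolding DS using N by (intro ennreal_leI) simp
  also have "\<dots> = K * ennreal e" using k e
    by (simp add: K_def ennreal_of_nat_eq_real_of_nat ennreal_mult[symmetric] ac_simps)
  finally have "D * P N \<le> ennreal e" using K0 by (simp add: ennreal_mult_le_mult_iff)
  then have "\<Psi> \<le> E N + ennreal e" using h1[of N] by (meson add_left_mono order_trans)
  also have "\<dots> \<le> S + ennreal e" using h3[of N] by (rule add_right_mono)
  finally show "\<Psi> \<le> S + ennreal e" .
qed

lemma kappa:
  fixes p :: "'q::finite \<Rightarrow> 'a::finite \<Rightarrow> 'q list pmf option"
  assumes "bmdp p c" shows "\<exists>\<kappa>>0. \<forall>q a. p q a \<noteq> None \<longrightarrow> \<kappa> \<le> c q a"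
proof -
  define S where "S = (\<lambda>(q,a). c q a) ` {(q,a). p q a \<noteq> None}"
  have fin: "finite S" unfolding S_def by simp
  obtain q :: 'q where "True" by simp
  obtain a where a: "p q a \<noteq> None" using assms unfolding bmdp_def by blast
  have ne: "S \<noteq> {}" unfolding S_def using a by auto
  have pos: "\<forall>s\<in>S. s > 0" using assms unfolding S_def bmdp_def by auto
  have "Min S > 0" using fin ne pos by simp
  moreover have "\<forall>q a. p q a \<noteq> None \<longrightarrow> Min S \<le> c q a"
    using fin unfolding S_def by (auto intro!: Min_le)
  ultimately show ?thesis by blast
qed

lemma X_le_strat:
  fixes p :: "'q::finite \<Rightarrow> 'a::finite \<Rightarrow> 'q list pmf option"
  assumes bm: "bmdp p c" and st: "strategy p \<sigma>"
  shows "X p c k q \<le> ETotal_strat p c [q] \<sigma>"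
proof -
  obtain \<kappa> where k: "\<kappa> > 0" "\<forall>q a. p q a \<noteq> None \<longrightarrow> \<kappa> \<le> c q a" using kappa[OF bm] by blast
  define h0 :: "('q,'a) hist" where "h0 = ([q], [])"
  have ls: "last_state h0 = [q]" by (simp add: h0_def last_state_def)
  have E: "ETotal_strat p c [q] \<sigma> = (SUP N. ETotalN p c \<sigma> N h0)" by (simp add: ETotal_strat_SUP h0_def)
  show ?thesis unfolding E
  proof (rule final_arith[OF k(1)])
    show "w p c k < \<top>" by (rule w_fin[OF bm])
    fix N
    have "Psi p c (zip (last_state h0) [k]) \<le> ETotalN p c \<sigma> N h0 + Dw p c (zip (last_state h0) [k]) * ProbN p \<sigma> N h0"
      by (rule LB[OF bm st]) (simp add: ls)
    then show "X p c k q \<le> ETotalN p c \<sigma> N h0 + w p c k * ProbN p \<sigma> N h0"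
      by (simp add: ls Psi_def Dw_def)
    show "ennreal \<kappa> * of_nat N * ProbN p \<sigma> N h0 \<le> ETotalN p c \<sigma> N h0"
      using k by (intro cost_bound[OF st]) auto
    show "ETotalN p c \<sigma> N h0 \<le> (SUP N. ETotalN p c \<sigma> N h0)" by (rule SUP_upper) auto
  qed
qed


theorem theorem1:
  fixes p :: "'q::finite \<Rightarrow> 'a::finite \<Rightarrow> 'q list pmf option"
    and c :: "'q \<Rightarrow> 'a \<Rightarrow> real"
  assumes "bmdp p c"
  defines "F \<equiv> Fop p c"
      and "xs \<equiv> (\<lambda>k. (Fop p c ^^ k) (\<lambda>_. 0))"
  shows "(\<forall>x y. x \<le> y \<longrightarrow> F x \<le> F y)
       \<and> (\<forall>Y L. incseq Y \<longrightarrow> (\<forall>q. (\<lambda>k. Y k q) \<longlonglongrightarrow> L q)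
              \<longrightarrow> (\<forall>q. (\<lambda>k. F (Y k) q) \<longlonglongrightarrow> F L q))
       \<and> (\<forall>k. (\<lambda>_. 0) \<le> xs k \<and> xs k \<le> xs (Suc k))
       \<and> cstar p c = F (cstar p c)
       \<and> (\<forall>k. xs k \<le> cstar p c)
       \<and> (\<forall>c'. c' = F c' \<longrightarrow> cstar p c \<le> c')
       \<and> (\<forall>q. (\<lambda>k. xs k q) \<longlonglongrightarrow> cstar p c q)"
proof -
  have xsX: "xs = X p c" unfolding xs_def X_def by (rule ext) simp
  have A1: "\<forall>x y. x \<le> y \<longrightarrow> F x \<le> F y" unfolding F_def using Fop_mono[OF assms(1)] by blast
  have A2: "\<forall>Y L. incseq Y \<longrightarrow> (\<forall>q. (\<lambda>k. Y k q) \<longlonglongrightarrow> L q)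
              \<longrightarrow> (\<forall>q. (\<lambda>k. F (Y k) q) \<longlonglongrightarrow> F L q)"
    unfolding F_def using Fop_cont[OF assms(1)] by blast
  have inc: "X p c k \<le> X p c (Suc k)" for k
  proof (induction k)
    case 0 then show ?case by (simp add: le_fun_def)
  next
    case (Suc k) then show ?case unfolding X_Suc[of p c "Suc k"] X_Suc[of p c k] by (rule Fop_mono[OF assms(1)])
  qed
  have A3: "\<forall>k. (\<lambda>_. 0) \<le> xs k \<and> xs k \<le> xs (Suc k)" unfolding xsX using inc by (auto simp: le_fun_def)
  have C: "X p c k \<le> cstar p c" for k
    unfolding le_fun_def cstar_def ETotal_def
    by (auto intro!: INF_greatest X_le_strat[OF assms(1)])
  have D: "cstar p c \<le> c'" if fp: "c' = F c'" for c'
  proof (rule le_funI)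
    fix q
    have fp': "c' = Fop p c c'" using fp F_def by simp
    have "cstar p c q \<le> ETotal_strat p c [q] (strat0 p c c')"
      unfolding cstar_def ETotal_def using strat0[OF assms(1)] by (intro INF_lower) auto
    also have "\<dots> = (SUP N. ETotalN p c (strat0 p c c') N ([q], []))" by (rule ETotal_strat_SUP)
    also have "\<dots> \<le> c' q"
    proof (rule SUP_least)
      fix N
      show "ETotalN p c (strat0 p c c') N ([q], []) \<le> c' q"
        using UB[OF assms(1) fp', of N "([q],[])"] by (simp add: last_state_def)
    qed
    finally show "cstar p c q \<le> c' q" .
  qed
  define L where "L = (\<lambda>q. SUP k. X p c k q)"
  have incq: "incseq (\<lambda>k. X p c k q)" for q using inc by (intro incseq_SucI) (auto simp: le_fun_def)
  have lim: "(\<lambda>k. X p c k q) \<longlonglongrightarrow> L q" for q unfolding L_def by (rule LIMSEQ_SUP[OF incq])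
  have fixL: "L = F L"
  proof (rule ext)
    fix q
    have "(\<lambda>k. Fop p c (X p c k) q) \<longlonglongrightarrow> Fop p c L q" by (rule Fop_cont[OF assms(1) lim])
    moreover have "(\<lambda>k. Fop p c (X p c k) q) \<longlonglongrightarrow> L q"
      using LIMSEQ_Suc[OF lim[of q]] by (simp add: X_Suc)
    ultimately show "L q = F L q" unfolding F_def using LIMSEQ_unique by blast
  qed
  have eq: "cstar p c = L"
  proof (rule antisym)
    show "cstar p c \<le> L" by (rule D[OF fixL])
    show "L \<le> cstar p c" unfolding L_def le_fun_def using C by (auto intro!: SUP_least simp: le_fun_def)
  qed
  show ?thesis
    using A1 A2 A3 C D fixL eq lim unfolding xsX by auto
qed

end
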